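(* Let $G$ be a simple graph of order $n$ and $m\ge 3$. Let $\alpha'(G)$ be the size of a maximum matching $M$ of $G$ and $l=n-2\alpha'(G)$ the number of $M$-unsaturated vertices of $G$. Then $s(G\circ C_m)=n\,s(C_m)+\alpha'(G)+l$ if $m\equiv 0\pmod 3$, and $s(G\circ C_m)=n\,s(C_m)$ otherwise.
   Context: A matching in a graph is a set of edges no two of which share a vertex; it is maximal if it is not properly contained in another matching, and maximum if it has the largest possible size. A vertex is $M$-unsaturated if no edge of $M$ is incident to it. The saturation number $s(G)$ is the minimum cardinality of a maximal matching of $G$. $C_m$ is the cycle on $m$ vertices; $s(C_m)=\lceil m/3\rceil$. The corona $G_1\circ G_2$ is obtained by taking one copy of $G_1$ and $|V(G_1)|$ disjoint copies of $G_2$, and joining the $i$-th vertex of $G_1$ by an edge to every vertex of the $i$-th copy of $G_2$. *)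

theory Defs
  imports Main
begin

definition simple_graph :: "'a set \<Rightarrow> 'a set set \<Rightarrow> bool" where
  "simple_graph V E \<longleftrightarrow> finite V \<and> (\<forall>e\<in>E. e \<subseteq> V \<and> card e = 2)"

definition matching :: "'a set set \<Rightarrow> 'a set set \<Rightarrow> bool" where
  "matching E M \<longleftrightarrow> M \<subseteq> E \<and> (\<forall>e1\<in>M. \<forall>e2\<in>M. e1 \<noteq> e2 \<longrightarrow> e1 \<inter> e2 = {})"

definition maximal_matching :: "'a set set \<Rightarrow> 'a set set \<Rightarrow> bool" where
  "maximal_matching E M \<longleftrightarrow> matching E M \<and> (\<forall>M'. matching E M' \<longrightarrow> M \<subseteq> M' \<longrightarrow> M' = M)"

definition matching_number :: "'a set set \<Rightarrow> nat" where
  "matching_number E = Max (card ` {M. matching E M})"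

definition saturation_number :: "'a set set \<Rightarrow> nat" where
  "saturation_number E = Min (card ` {M. maximal_matching E M})"

definition cycle_vertices :: "nat \<Rightarrow> nat set" where
  "cycle_vertices m = {0..<m}"

definition cycle_edges :: "nat \<Rightarrow> nat set set" where
  "cycle_edges m = {{i, (i + 1) mod m} | i. i < m}"

text \<open>Corona G1 o G2: vertex Inl v for v in V1, vertex Inr (v, w) is the copy of w in the v-th copy of G2.\<close>
definition corona_vertices :: "'a set \<Rightarrow> 'b set \<Rightarrow> ('a + 'a \<times> 'b) set" where
  "corona_vertices V1 V2 = Inl ` V1 \<union> {Inr (v, w) | v w. v \<in> V1 \<and> w \<in> V2}"

definition corona_edges :: "'a set \<Rightarrow> 'a set set \<Rightarrow> 'b set \<Rightarrow> 'b set set \<Rightarrow> ('a + 'a \<times> 'b) set set" where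
  "corona_edges V1 E1 V2 E2 =
     (\<lambda>e. Inl ` e) ` E1
     \<union> {(\<lambda>w. Inr (v, w)) ` e | v e. v \<in> V1 \<and> e \<in> E2}
     \<union> {{Inl v, Inr (v, w)} | v w. v \<in> V1 \<and> w \<in> V2}"

end

theory Submission
  imports Defs
begin


lemma dom_max:
  assumes "matching C M" "\<forall>e\<in>C. \<exists>f\<in>M. e \<inter> f \<noteq> {}"
  shows "maximal_matching C M"
  unfolding maximal_matching_def
proof (intro conjI allI impI)
  show "matching C M" by fact
  fix M' assume M': "matching C M'" "M \<subseteq> M'"
  show "M' = M"
  proof (rule ccontr)
    assume "M' \<noteq> M"
    then obtain e where e: "e \<in> M'" "e \<notin> M" using M' by blast
    then have "e \<in> C" using M' unfolding matching_def by blast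
    then obtain f where f: "f \<in> M" "e \<inter> f \<noteq> {}" using assms(2) by blast
    have "f \<in> M'" using f M' by blast
    have "e \<noteq> f" using e f by blast
    then show False using M'(1) e f \<open>f\<in>M'\<close> unfolding matching_def by blast
  qed
qed

lemma max_dom:
  assumes "maximal_matching C M" "e \<in> C" "e \<noteq> {}"
  shows "\<exists>f\<in>M. e \<inter> f \<noteq> {}"
proof (rule ccontr)
  assume H: "\<not> (\<exists>f\<in>M. e \<inter> f \<noteq> {})"
  have mM: "matching C M" using assms(1) unfolding maximal_matching_def by blast
  have "matching C (insert e M)"
    using mM H assms(2) unfolding matching_def by blast
  then have "insert e M = M" using assms(1) unfolding maximal_matching_def by blast
  then have "e \<in> M" by blast
  then show False using H assms(3) by blast
qed

lemma sat_eq: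
  assumes "finite C" "maximal_matching C M" "card M \<le> b"
    "\<And>M. maximal_matching C M \<Longrightarrow> b \<le> card M"
  shows "saturation_number C = b"
proof -
  have fin: "finite (card ` {M. maximal_matching C M})"
  proof -
    have "{M. maximal_matching C M} \<subseteq> Pow C"
      unfolding maximal_matching_def matching_def by blast
    then show ?thesis using assms(1) finite_subset by blast
  qed
  have "card M = b" using assms(2,3,4) by force
  show ?thesis unfolding saturation_number_def
    apply (rule Min_eqI[OF fin])
    using assms(4) \<open>card M = b\<close> assms(2) by auto
qed

lemma matching_number_props:
  assumes "finite E"
  shows "\<exists>M0. matching E M0 \<and> card M0 = matching_number E"
    "\<And>M. matching E M \<Longrightarrow> card M \<le> matching_number E"
proof -
  have fin: "finite (card ` {M. matching E M})"
  proof -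
    have "{M. matching E M} \<subseteq> Pow E"
      unfolding matching_def by blast
    then show ?thesis using assms(1) finite_subset by blast
  qed
  have ne: "card ` {M. matching E M} \<noteq> {}"
    using matching_def by fastforce
  show "\<exists>M0. matching E M0 \<and> card M0 = matching_number E"
    using Max_in[OF fin ne] unfolding matching_number_def by auto
  show "\<And>M. matching E M \<Longrightarrow> card M \<le> matching_number E"
    unfolding matching_number_def using fin by (simp add: Max_ge)
qed

lemma card_Union_matching:
  assumes "matching E M" "\<forall>e\<in>E. card e = 2"
  shows "card (\<Union>M) = 2 * card M"
proof -
  have "pairwise disjnt M" using assms(1) unfolding matching_def pairwise_def disjnt_def by blast
  moreover have "\<And>A. A \<in> M \<Longrightarrow> finite A" using assms unfolding matching_def
    by (intro card_ge_0_finite) auto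
  ultimately have "card (\<Union>M) = sum card M" by (rule card_Union_disjoint)
  also have "\<dots> = sum (\<lambda>_. 2) M" using assms unfolding matching_def
    by (intro sum.cong) auto
  finally show ?thesis by simp
qed

lemma card_Union_le2:
  assumes "\<forall>e\<in>M. card e = 2"
  shows "card (\<Union>M) \<le> 2 * card M"
proof -
  have "card (\<Union>M) \<le> sum card M" by (rule card_Union_le_sum_card)
  also have "\<dots> = sum (\<lambda>_. 2) M" using assms by (intro sum.cong) auto
  finally show ?thesis by simp
qed

lemma cyc_mem: "e \<in> cycle_edges m \<longleftrightarrow> (\<exists>i<m. e = {i, Suc i mod m})"
  unfolding cycle_edges_def by auto

lemma cyc_fin: "finite (cycle_edges m)"
proof -
  have "cycle_edges m = (\<lambda>i. {i, Suc i mod m}) ` {..<m}" unfolding cycle_edges_def by auto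
  then show ?thesis by simp
qed

lemma cyc_sub: "e \<in> cycle_edges m \<Longrightarrow> e \<subseteq> {0..<m}"
  unfolding cyc_mem by auto

lemma suc_mod_cases: "i < m \<Longrightarrow> (Suc i < m \<and> Suc i mod m = Suc i) \<or> (Suc i = m \<and> Suc i mod m = 0)"
proof (cases "Suc i < m")
  case False
  assume "i < m"
  then have "Suc i = m" using False by simp
  then show ?thesis by simp
qed simp

lemma suc_mod_neq: "m \<ge> 3 \<Longrightarrow> i < m \<Longrightarrow> i \<noteq> Suc i mod m"
  using suc_mod_cases[of i m] by auto

lemma cyc_card: "m \<ge> 3 \<Longrightarrow> e \<in> cycle_edges m \<Longrightarrow> card e = 2"
  unfolding cyc_mem using suc_mod_neq by fastforce

lemma suc_mod_inj: "a < m \<Longrightarrow> b < m \<Longrightarrow> Suc a mod m = Suc b mod m \<Longrightarrow> a = b"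
  using suc_mod_cases[of a m] suc_mod_cases[of b m] by auto



lemma cycle_count:
  assumes m3: "m \<ge> 3" and mN: "matching (cycle_edges m) N" and Hs: "H \<subseteq> {0..<m}"
    and HN: "H \<inter> \<Union>N = {}"
    and dom: "\<forall>e\<in>cycle_edges m. e \<inter> (\<Union>N \<union> H) \<noteq> {}"
  shows "m \<le> 3 * card N + 2 * card H"
proof -
  define T where "T = \<Union>N \<union> H"
  define U where "U = {0..<m} - T"
  have Nsub: "N \<subseteq> cycle_edges m" using mN unfolding matching_def by blast
  have finN: "finite N" using Nsub cyc_fin finite_subset by blast
  have finH: "finite H" using Hs finite_subset by blast
  have c2: "\<forall>e\<in>N. card e = 2" using Nsub cyc_card m3 by blast
  have finT: "finite T" unfolding T_def using Nsub cyc_sub finH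
    by (intro finite_UnI finite_Union finN) (auto intro: finite_subset[OF cyc_sub])
  have cT: "card T \<le> 2 * card N + card H"
  proof -
    have "card T \<le> card (\<Union>N) + card H" unfolding T_def by (rule card_Un_le)
    then show ?thesis using card_Union_le2[OF c2] by linarith
  qed
  define nxt where "nxt u = Suc u mod m" for u
  define \<phi> where "\<phi> u = (if nxt u \<in> H then {nxt u} else (SOME f. f \<in> N \<and> nxt u \<in> f))" for u
  have nxtT: "nxt u \<in> T" if "u \<in> U" for u
  proof -
    have um: "u < m" "u \<notin> T" using that unfolding U_def by auto
    have "{u, nxt u} \<in> cycle_edges m" unfolding cyc_mem nxt_def using um by blast
    then have "{u, nxt u} \<inter> T \<noteq> {}" using dom unfolding T_def by blast
    then show ?thesis using um by blast
  qed
  have phi: "(nxt u \<in> H \<and> \<phi> u = {nxt u}) \<or> (nxt u \<notin> H \<and> \<phi> u \<in> N \<and> nxt u \<in> \<phi> u)"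
    if "u \<in> U" for u
  proof (cases "nxt u \<in> H")
    case True then show ?thesis unfolding \<phi>_def by simp
  next
    case False
    then have ex: "\<exists>f. f \<in> N \<and> nxt u \<in> f" using nxtT[OF that] unfolding T_def by blast
    have "(SOME f. f \<in> N \<and> nxt u \<in> f) \<in> N \<and> nxt u \<in> (SOME f. f \<in> N \<and> nxt u \<in> f)"
      by (rule someI_ex[OF ex])
    then have "\<phi> u \<in> N \<and> nxt u \<in> \<phi> u" unfolding \<phi>_def using False by simp
    then show ?thesis using False by blast
  qed
  have inj: "inj_on \<phi> U"
  proof (rule inj_onI)
    fix u1 u2 assume u: "u1 \<in> U" "u2 \<in> U" "\<phi> u1 = \<phi> u2"
    have um: "u1 < m" "u2 < m" "u1 \<notin> T" "u2 \<notin> T" using u unfolding U_def by auto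
    have "nxt u1 = nxt u2"
    proof (rule ccontr)
      assume ne: "nxt u1 \<noteq> nxt u2"
      show False
      proof (cases "nxt u1 \<in> H \<or> nxt u2 \<in> H")
        case True
        show False
        proof (cases "nxt u1 \<in> H \<and> nxt u2 \<in> H")
          case True
          then show False using phi[OF u(1)] phi[OF u(2)] u(3) ne by auto
        next
          case False
          then obtain a b where ab: "\<phi> a = {nxt a}" "\<phi> b \<in> N" "\<phi> a = \<phi> b"
            using phi[OF u(1)] phi[OF u(2)] u(3) \<open>nxt u1 \<in> H \<or> nxt u2 \<in> H\<close> by metis
          then have "card (\<phi> b) = 2" using c2 by blast
          then show False using ab by simp
        qed
      next
        case False
        then have f: "\<phi> u1 \<in> N" "nxt u1 \<in> \<phi> u1" "nxt u2 \<in> \<phi> u1"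
          using phi[OF u(1)] phi[OF u(2)] u(3) by auto
        then obtain i where i: "i < m" "\<phi> u1 = {i, Suc i mod m}" using Nsub cyc_mem by blast
        have "(nxt u1 = i \<and> nxt u2 = Suc i mod m) \<or> (nxt u2 = i \<and> nxt u1 = Suc i mod m)"
          using f i ne by auto
        then have A: "nxt u2 = nxt (nxt u1) \<or> nxt u1 = nxt (nxt u2)" unfolding nxt_def by auto
        have B: "nxt u1 < m" "nxt u2 < m" unfolding nxt_def using um by auto
        have "nxt u1 = u2 \<or> nxt u2 = u1"
          using A
        proof
          assume "nxt u2 = nxt (nxt u1)"
          then have "u2 = nxt u1" using suc_mod_inj[OF um(2) B(1)] unfolding nxt_def by simp
          then show ?thesis by simp
        next
          assume "nxt u1 = nxt (nxt u2)"
          then have "u1 = nxt u2" using suc_mod_inj[OF um(1) B(2)] unfolding nxt_def by simp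
          then show ?thesis by simp
        qed
        then show False using nxtT[OF u(1)] nxtT[OF u(2)] um by auto
      qed
    qed
    then show "u1 = u2" using suc_mod_inj um unfolding nxt_def by blast
  qed
  have img: "\<phi> ` U \<subseteq> N \<union> (\<lambda>h. {h}) ` H" using phi by blast
  have finU: "finite U" unfolding U_def by simp
  have cU: "card U \<le> card N + card H"
  proof -
    have "card U = card (\<phi> ` U)" using card_image[OF inj] by simp
    also have "\<dots> \<le> card (N \<union> (\<lambda>h. {h}) ` H)" using img finN finH by (intro card_mono) auto
    also have "\<dots> \<le> card N + card ((\<lambda>h. {h}) ` H)" by (rule card_Un_le)
    also have "\<dots> \<le> card N + card H" using card_image_le[OF finH] by simp
    finally show ?thesis .
  qed
  have "m = card {0..<m}" by simp
  also have "\<dots> \<le> card (U \<union> T)" using finU finT unfolding U_def by (intro card_mono) auto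
  also have "\<dots> \<le> card U + card T" by (rule card_Un_le)
  finally show ?thesis using cU cT by linarith
qed



definition P :: "nat \<Rightarrow> nat \<Rightarrow> nat set set" where
  "P r q = (\<lambda>i. {3*i+r, 3*i+r+1}) ` {..<q}"

lemma P_sub: assumes "3*q + r \<le> m + 1" shows "P r q \<subseteq> cycle_edges m"
proof
  fix f assume "f \<in> P r q"
  then obtain i where i: "i < q" "f = {3*i+r, 3*i+r+1}" unfolding P_def by blast
  have "3*i+r+1 < m" using i assms by linarith
  then have "f = {3*i+r, Suc (3*i+r) mod m}" using i by simp
  moreover have "3*i+r < m" using \<open>3*i+r+1 < m\<close> by simp
  ultimately show "f \<in> cycle_edges m" unfolding cyc_mem by blast
qed

lemma P_match: assumes "3*q + r \<le> m + 1" "r \<le> 2" shows "matching (cycle_edges m) (P r q)"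
  unfolding matching_def
proof (intro conjI ballI impI)
  show "P r q \<subseteq> cycle_edges m" by (rule P_sub[OF assms(1)])
  fix e1 e2 assume e: "e1 \<in> P r q" "e2 \<in> P r q" "e1 \<noteq> e2"
  then obtain i j where "e1 = {3*i+r, 3*i+r+1}" "e2 = {3*j+r, 3*j+r+1}" unfolding P_def by blast
  moreover have "i \<noteq> j" using e calculation by blast
  then have "3*i+r \<noteq> 3*j+r" "3*i+r \<noteq> 3*j+r+1" "3*i+r+1 \<noteq> 3*j+r" "3*i+r+1 \<noteq> 3*j+r+1"
    by presburger+
  ultimately show "e1 \<inter> e2 = {}" by auto
qed

lemma P_card: "card (P r q) \<le> q"
  unfolding P_def using card_image_le[of "{..<q}"] by simp

lemma P_Union: "x \<in> \<Union>(P r q) \<longleftrightarrow> (\<exists>i<q. x = 3*i+r \<or> x = 3*i+r+1)"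
  unfolding P_def by auto

lemma hitP2: assumes "x \<in> e" "i < q" "x = 3*i+r \<or> x = 3*i+r+1" shows "\<exists>f\<in>P r q. e \<inter> f \<noteq> {}"
proof
  show "{3*i+r, 3*i+r+1} \<in> P r q" unfolding P_def using assms(2) by blast
  show "e \<inter> {3*i+r, 3*i+r+1} \<noteq> {}" using assms(1,3) by blast
qed

lemma mod3_cases: fixes n :: nat obtains k where "n = 3*k" | k where "n = 3*k+1" | k where "n = 3*k+2"
proof -
  have e: "n = 3*(n div 3) + n mod 3" by simp
  have "n mod 3 < 3" by simp
  then have "n mod 3 = 0 \<or> n mod 3 = 1 \<or> n mod 3 = 2" by linarith
  then show ?thesis using that e by (metis add_0_right)
qed

lemma m0_cases: fixes m :: nat assumes "m mod 3 = 0" obtains t where "m = 3*t"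
  using assms by (metis mult_div_mod_eq add_0_right)

lemma m12_cases: fixes m :: nat assumes "m mod 3 \<noteq> 0" obtains t where "m = 3*t+1" | t where "m = 3*t+2"
proof (cases m rule: mod3_cases)
  case (1 k) then show ?thesis using assms by simp
qed (auto intro: that)

lemma D0_dom:
  assumes "m mod 3 = 0" "m \<ge> 3" "e \<in> cycle_edges m"
  shows "\<exists>f\<in>P 0 (m div 3). e \<inter> f \<noteq> {}"
proof -
  obtain t where t: "m = 3*t" using m0_cases[OF assms(1)] by blast
  then have mt: "m div 3 = t" by simp
  obtain j where j: "j < m" "e = {j, Suc j mod m}" using assms(3) cyc_mem by blast
  from suc_mod_cases[OF j(1)] show ?thesis
  proof
    assume a: "Suc j < m \<and> Suc j mod m = Suc j"
    show ?thesis
    proof (cases j rule: mod3_cases)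
      case (1 k)
      then show ?thesis using hitP2[of j e k t 0] j t mt by simp
    next
      case (2 k)
      then show ?thesis using hitP2[of j e k t 0] j t mt by simp
    next
      case (3 k)
      have "k + 1 < t" using 3 a t by linarith
      then show ?thesis using hitP2[of "Suc j" e "k+1" t 0] j a 3 mt by simp
    qed
  next
    assume b: "Suc j = m \<and> Suc j mod m = 0"
    have "(0::nat) < t" using assms(2) t by simp
    then show ?thesis using hitP2[of 0 e 0 t 0] j b mt by auto
  qed
qed

lemma D1a_dom:
  assumes "m mod 3 = 0" "m \<ge> 3" "e \<in> cycle_edges m"
  shows "0 \<in> e \<or> (\<exists>f\<in>P 1 (m div 3). e \<inter> f \<noteq> {})"
proof -
  obtain t where t: "m = 3*t" using m0_cases[OF assms(1)] by blast
  then have mt: "m div 3 = t" by simp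
  obtain j where j: "j < m" "e = {j, Suc j mod m}" using assms(3) cyc_mem by blast
  show ?thesis
  proof (cases "j = 0 \<or> Suc j = m")
    case True then show ?thesis using j by auto
  next
    case False
    then have a: "Suc j < m" "Suc j mod m = Suc j" "j \<ge> 1" using j by auto
    show ?thesis
    proof (cases j rule: mod3_cases)
      case (1 k)
      have "k < t" using 1 a t by linarith
      then show ?thesis using hitP2[of "Suc j" e k t 1] j a 1 mt by simp
    next
      case (2 k)
      have "k < t" using 2 a t by linarith
      then show ?thesis using hitP2[of j e k t 1] j 2 mt by simp
    next
      case (3 k)
      have "k < t" using 3 a t by linarith
      then show ?thesis using hitP2[of j e k t 1] j 3 mt by simp
    qed
  qed
qed

lemma D1b_dom:
  assumes "m mod 3 \<noteq> 0" "m \<ge> 3" "e \<in> cycle_edges m"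
  shows "0 \<in> e \<or> (\<exists>f\<in>P 2 ((m-1) div 3). e \<inter> f \<noteq> {})"
proof -
  obtain t s where t: "m = 3*t+s" "s = 1 \<or> s = 2" using m12_cases[OF assms(1)] by metis
  then have mt: "(m-1) div 3 = t" by auto
  obtain j where j: "j < m" "e = {j, Suc j mod m}" using assms(3) cyc_mem by blast
  show ?thesis
  proof (cases "j = 0 \<or> Suc j = m")
    case True then show ?thesis using j by auto
  next
    case False
    then have a: "Suc j < m" "Suc j mod m = Suc j" "j \<ge> 1" using j by auto
    show ?thesis
    proof (cases j rule: mod3_cases)
      case (1 k)
      then obtain k' where k': "k = Suc k'" using a(3) by (cases k) auto
      have "k' < t" using 1 a t k' by linarith
      moreover have "j = 3*k'+2+1" using 1 k' by simp
      ultimately show ?thesis using hitP2[of j e k' t 2] j mt by simp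
    next
      case (2 k)
      have "k < t" using 2 a t by linarith
      then show ?thesis using hitP2[of "Suc j" e k t 2] j a 2 mt by simp
    next
      case (3 k)
      have "k < t" using 3 a t by linarith
      then show ?thesis using hitP2[of j e k t 2] j 3 mt by simp
    qed
  qed
qed

lemma P_no0: "r \<ge> 1 \<Longrightarrow> 0 \<notin> \<Union>(P r q)"
  unfolding P_Union by auto

lemma P2_no1: "1 \<notin> \<Union>(P 2 q)"
  unfolding P_Union by auto

lemma cycle_sat: assumes "m \<ge> 3" shows "saturation_number (cycle_edges m) = (m + 2) div 3"
proof -
  have lower: "(m + 2) div 3 \<le> card M" if M: "maximal_matching (cycle_edges m) M" for M
  proof -
  have mM: "matching (cycle_edges m) M" using M unfolding maximal_matching_def by blast
  have "\<forall>e\<in>cycle_edges m. e \<inter> (\<Union>M \<union> {}) \<noteq> {}"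
  proof
    fix e assume e: "e \<in> cycle_edges m"
    have "e \<noteq> {}" using cyc_card[OF assms e] by auto
    then show "e \<inter> (\<Union>M \<union> {}) \<noteq> {}" using max_dom[OF M e] by blast
  qed
  then have "m \<le> 3 * card M + 2 * card ({}::nat set)"
    using cycle_count[OF assms mM, of "{}"] by simp
  then show "(m + 2) div 3 \<le> card M" by simp
  qed
  have "\<exists>M. maximal_matching (cycle_edges m) M \<and> card M \<le> (m + 2) div 3"
  proof (cases "m mod 3 = 0")
    case True
    have "3 * (m div 3) + 0 \<le> m + 1" by simp
    note mt = P_match[OF this]
    have "maximal_matching (cycle_edges m) (P 0 (m div 3))"
      using mt D0_dom[OF True assms] by (intro dom_max) auto
    moreover have "card (P 0 (m div 3)) \<le> (m + 2) div 3" using P_card[of 0 "m div 3"] True by presburger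
    ultimately show ?thesis by blast
  next
    case False
    define D where "D = insert {0,1} (P 2 ((m-1) div 3))"
    have le: "3 * ((m-1) div 3) + 2 \<le> m + 1" using assms by presburger
    have s01: "{0,1} \<in> cycle_edges m" unfolding cyc_mem using assms
      by (intro exI[of _ 0]) auto
    have "matching (cycle_edges m) D"
      using P_match[OF le] s01 P_no0[of 2] P2_no1 unfolding D_def matching_def
      by (auto; blast)
    moreover have "\<forall>e\<in>cycle_edges m. \<exists>f\<in>D. e \<inter> f \<noteq> {}"
    proof
      fix e assume "e \<in> cycle_edges m"
      from D1b_dom[OF False assms this] show "\<exists>f\<in>D. e \<inter> f \<noteq> {}" unfolding D_def by auto
    qed
    ultimately have "maximal_matching (cycle_edges m) D" by (rule dom_max)
    moreover have "card D \<le> (m + 2) div 3"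
    proof -
      have fP: "finite (P 2 ((m-1) div 3))" unfolding P_def by simp
      have "card D \<le> Suc (card (P 2 ((m-1) div 3)))" unfolding D_def
        using card_insert_if[OF fP] by simp
      then show ?thesis using P_card[of 2 "(m-1) div 3"] assms by presburger
    qed
    ultimately show ?thesis by blast
  qed
  then obtain M where "maximal_matching (cycle_edges m) M" "card M \<le> (m + 2) div 3" by blast
  then show ?thesis using sat_eq[OF cyc_fin] lower by blast
qed



definition img :: "'a \<Rightarrow> nat set \<Rightarrow> ('a + 'a \<times> nat) set" where
  "img v e = (\<lambda>w. Inr (v, w)) ` e"
definition hub :: "'a \<Rightarrow> nat \<Rightarrow> ('a + 'a \<times> nat) set" where
  "hub v w = {Inl v, Inr (v, w)}"

lemma cor_mem:
  "f \<in> corona_edges V E (cycle_vertices m) (cycle_edges m) \<longleftrightarrow>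
    (\<exists>e\<in>E. f = Inl ` e) \<or> (\<exists>v\<in>V. \<exists>e\<in>cycle_edges m. f = img v e) \<or> (\<exists>v\<in>V. \<exists>w<m. f = hub v w)"
  unfolding corona_edges_def img_def hub_def cycle_vertices_def by auto

lemma cor_fin:
  assumes "finite V" "finite E"
  shows "finite (corona_edges V E (cycle_vertices m) (cycle_edges m))"
proof -
  have "corona_edges V E (cycle_vertices m) (cycle_edges m) \<subseteq>
     (\<lambda>e. Inl ` e) ` E \<union> (\<lambda>(v,e). img v e) ` (V \<times> cycle_edges m) \<union> (\<lambda>(v,w). hub v w) ` (V \<times> {0..<m})"
  proof
    fix x assume "x \<in> corona_edges V E (cycle_vertices m) (cycle_edges m)"
    then consider (a) e where "e \<in> E" "x = Inl ` e" | (b) v e where "v \<in> V" "e \<in> cycle_edges m" "x = img v e"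
      | (c) v w where "v \<in> V" "w < m" "x = hub v w" unfolding cor_mem by blast
    then show "x \<in> (\<lambda>e. Inl ` e) ` E \<union> (\<lambda>(v,e). img v e) ` (V \<times> cycle_edges m) \<union> (\<lambda>(v,w). hub v w) ` (V \<times> {0..<m})"
    proof cases
      case a then show ?thesis by blast
    next
      case b then have "x \<in> (\<lambda>(v,e). img v e) ` (V \<times> cycle_edges m)" by (intro rev_image_eqI[of "(v,e)"]) auto
      then show ?thesis by blast
    next
      case c then have "x \<in> (\<lambda>(v,w). hub v w) ` (V \<times> {0..<m})" by (intro rev_image_eqI[of "(v,w)"]) auto
      then show ?thesis by blast
    qed
  qed
  moreover have "finite ((\<lambda>e. Inl ` e) ` E \<union> (\<lambda>(v,e). img v e) ` (V \<times> cycle_edges m) \<union> (\<lambda>(v,w). hub v w) ` (V \<times> {0..<m}))"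
    using assms cyc_fin by auto
  ultimately show ?thesis by (rule finite_subset)
qed

lemma img_inj: "img v e1 = img v e2 \<Longrightarrow> e1 = e2"
  unfolding img_def by (auto simp: inj_image_eq_iff inj_def)

lemma hub_inj: "hub v w1 = hub v w2 \<Longrightarrow> w1 = w2"
  unfolding hub_def by (auto simp: doubleton_eq_iff)

lemma Inl_inj: "Inl ` e1 = (Inl ` e2 :: ('a + 'b) set) \<Longrightarrow> e1 = e2"
  by (auto simp: inj_image_eq_iff inj_def)

lemma simple_props:
  assumes "simple_graph V E"
  shows "finite V" "finite E" "\<forall>e\<in>E. card e = 2" "\<forall>e\<in>E. e \<subseteq> V" "\<forall>e\<in>E. e \<noteq> {}"
proof -
  show fV: "finite V" using assms unfolding simple_graph_def by blast
  have "E \<subseteq> Pow V" using assms unfolding simple_graph_def by blast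
  then show "finite E" using fV by (meson finite_Pow_iff finite_subset)
  show "\<forall>e\<in>E. card e = 2" "\<forall>e\<in>E. e \<subseteq> V" using assms unfolding simple_graph_def by blast+
  then show "\<forall>e\<in>E. e \<noteq> {}" by auto
qed

definition ME :: "('a + 'a \<times> nat) set set \<Rightarrow> 'a set set \<Rightarrow> 'a set set" where "ME M E = {e\<in>E. Inl ` e \<in> M}"
definition NN :: "('a + 'a \<times> nat) set set \<Rightarrow> nat \<Rightarrow> 'a \<Rightarrow> nat set set" where "NN M m v = {e \<in> cycle_edges m. img v e \<in> M}"
definition HH :: "('a + 'a \<times> nat) set set \<Rightarrow> nat \<Rightarrow> 'a \<Rightarrow> nat set" where "HH M m v = {w. w < m \<and> hub v w \<in> M}"

lemma card_part:
  assumes sg: "simple_graph V E" and m3: "m \<ge> 3"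
    and MC: "M \<subseteq> corona_edges V E (cycle_vertices m) (cycle_edges m)"
  shows "card (ME M E) + (\<Sum>v\<in>V. card (NN M m v) + card (HH M m v)) \<le> card M"
proof -
  note sp = simple_props[OF sg]
  define A :: "('a + 'a \<times> nat) set set" where "A = (\<lambda>e. Inl ` e) ` ME M E"
  define K where "K v = img v ` NN M m v \<union> hub v ` HH M m v" for v
  have finM: "finite M" using MC cor_fin[OF sp(1,2)] finite_subset by blast
  have finME: "finite (ME M E)" using sp(2) unfolding ME_def by simp
  have finN: "finite (NN M m v)" for v using cyc_fin unfolding NN_def by simp
  have finH: "finite (HH M m v)" for v unfolding HH_def by simp
  have cA: "card A = card (ME M E)" unfolding A_def
    by (rule card_image) (auto intro: inj_onI Inl_inj)
  have cK: "card (K v) = card (NN M m v) + card (HH M m v)" for v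
  proof -
    have "card (K v) = card (img v ` NN M m v) + card (hub v ` HH M m v)"
      unfolding K_def using finN finH
      by (intro card_Un_disjoint) (auto simp: img_def hub_def)
    also have "card (img v ` NN M m v) = card (NN M m v)"
      by (rule card_image, rule inj_onI, erule img_inj)
    also have "card (hub v ` HH M m v) = card (HH M m v)"
      by (rule card_image, rule inj_onI, erule hub_inj)
    finally show ?thesis .
  qed
  have Kprop: "(\<exists>w. Inr (v, w) \<in> x) \<and> (\<forall>u w. Inr (u, w) \<in> x \<longrightarrow> u = v)" if "x \<in> K v" for x v
  proof -
    have "(\<exists>e\<in>cycle_edges m. x = img v e) \<or> (\<exists>w. x = hub v w)"
      using that unfolding K_def NN_def HH_def by blast
    then show ?thesis
    proof
      assume "\<exists>e\<in>cycle_edges m. x = img v e"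
      then obtain e where e: "e \<in> cycle_edges m" "x = img v e" by blast
      then have "e \<noteq> {}" using cyc_card[OF m3] by fastforce
      then show ?thesis using e unfolding img_def by auto
    qed (auto simp: hub_def)
  qed
  have cUK: "card (\<Union>v\<in>V. K v) = (\<Sum>v\<in>V. card (K v))"
  proof (rule card_UN_disjoint)
    show "finite V" by (rule sp(1))
    show "\<forall>i\<in>V. finite (K i)" unfolding K_def using finN finH by blast
    show "\<forall>i\<in>V. \<forall>j\<in>V. i \<noteq> j \<longrightarrow> K i \<inter> K j = {}"
    proof (intro ballI impI)
      fix i j assume "i \<in> V" "j \<in> V" "i \<noteq> j"
      show "K i \<inter> K j = {}"
      proof (rule ccontr)
        assume "K i \<inter> K j \<noteq> {}"
        then obtain x where "x \<in> K i" "x \<in> K j" by blast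
        then show False using Kprop[of x i] Kprop[of x j] \<open>i \<noteq> j\<close> by blast
      qed
    qed
  qed
  have disjAK: "A \<inter> (\<Union>v\<in>V. K v) = {}"
  proof (rule ccontr)
    assume "A \<inter> (\<Union>v\<in>V. K v) \<noteq> {}"
    then obtain x v where x: "x \<in> A" "x \<in> K v" by blast
    then obtain w where "Inr (v, w) \<in> x" using Kprop by blast
    then show False using x(1) unfolding A_def by auto
  qed
  have finA: "finite A" unfolding A_def using finME by simp
  have finUK: "finite (\<Union>v\<in>V. K v)" using sp(1) finN finH unfolding K_def by blast
  have sub: "A \<union> (\<Union>v\<in>V. K v) \<subseteq> M"
    unfolding A_def K_def ME_def NN_def HH_def by auto
  have "card (A \<union> (\<Union>v\<in>V. K v)) = card A + card (\<Union>v\<in>V. K v)"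
    using finA finUK disjAK by (rule card_Un_disjoint)
  also have "\<dots> = card (ME M E) + (\<Sum>v\<in>V. card (NN M m v) + card (HH M m v))"
    using cA cUK cK by simp
  finally show ?thesis using card_mono[OF finM sub] by simp
qed



lemma copy_props:
  assumes sg: "simple_graph V E" and m3: "m \<ge> 3"
    and M: "maximal_matching (corona_edges V E (cycle_vertices m) (cycle_edges m)) M"
    and v: "v \<in> V"
  shows "matching (cycle_edges m) (NN M m v)"
    "HH M m v \<subseteq> {0..<m}"
    "HH M m v \<inter> \<Union>(NN M m v) = {}"
    "\<forall>e\<in>cycle_edges m. e \<inter> (\<Union>(NN M m v) \<union> HH M m v) \<noteq> {}"
    "card (HH M m v) \<le> 1"
    "HH M m v = {} \<Longrightarrow> v \<notin> \<Union>(ME M E) \<Longrightarrow> m \<le> 2 * card (NN M m v)"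
proof -
  let ?C = "corona_edges V E (cycle_vertices m) (cycle_edges m)"
  have mM: "matching ?C M" using M unfolding maximal_matching_def by blast
  then have MC: "M \<subseteq> ?C" unfolding matching_def by blast
  have dis: "f1 \<in> M \<Longrightarrow> f2 \<in> M \<Longrightarrow> f1 \<noteq> f2 \<Longrightarrow> f1 \<inter> f2 = {}" for f1 f2
    using mM unfolding matching_def by blast
  show "matching (cycle_edges m) (NN M m v)" unfolding matching_def
  proof (intro conjI ballI impI)
    show "NN M m v \<subseteq> cycle_edges m" unfolding NN_def by blast
    fix e1 e2 assume e: "e1 \<in> NN M m v" "e2 \<in> NN M m v" "e1 \<noteq> e2"
    have "img v e1 \<noteq> img v e2"
    proof
      assume "img v e1 = img v e2"
      then have "e1 = e2" by (rule img_inj)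
      then show False using e(3) by simp
    qed
    then have "img v e1 \<inter> img v e2 = {}" using dis e unfolding NN_def by blast
    then show "e1 \<inter> e2 = {}" unfolding img_def by auto
  qed
  show "HH M m v \<subseteq> {0..<m}" unfolding HH_def by auto
  show "HH M m v \<inter> \<Union>(NN M m v) = {}"
  proof (rule ccontr)
    assume "HH M m v \<inter> \<Union>(NN M m v) \<noteq> {}"
    then obtain w e where w: "hub v w \<in> M" "img v e \<in> M" "w \<in> e"
      unfolding HH_def NN_def by blast
    have "hub v w \<noteq> img v e" unfolding hub_def img_def by auto
    moreover have "Inr (v, w) \<in> hub v w \<inter> img v e" using w(3) unfolding hub_def img_def by auto
    ultimately show False using dis w by blast
  qed
  show "\<forall>e\<in>cycle_edges m. e \<inter> (\<Union>(NN M m v) \<union> HH M m v) \<noteq> {}"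
  proof
    fix e assume e: "e \<in> cycle_edges m"
    have eC: "img v e \<in> ?C" unfolding cor_mem using v e by blast
    have "e \<noteq> {}" using cyc_card[OF m3 e] by auto
    then have "img v e \<noteq> {}" unfolding img_def by auto
    then obtain f where f: "f \<in> M" "img v e \<inter> f \<noteq> {}" using max_dom[OF M eC] by blast
    then obtain w where w: "w \<in> e" "Inr (v, w) \<in> f" unfolding img_def by auto
    have "f \<in> ?C" using f MC by blast
    then consider (a) e' where "f = Inl ` e'" | (b) v' e' where "e' \<in> cycle_edges m" "f = img v' e'"
      | (c) v' w' where "w' < m" "f = hub v' w'" unfolding cor_mem by blast
    then show "e \<inter> (\<Union>(NN M m v) \<union> HH M m v) \<noteq> {}"
    proof cases
      case a then show ?thesis using w by auto
    next
      case b
      then have "v' = v" "w \<in> e'" using w unfolding img_def by auto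
      then have "e' \<in> NN M m v" using b f unfolding NN_def by simp
      then show ?thesis using w \<open>w \<in> e'\<close> by blast
    next
      case c
      then have "v' = v" "w' = w" using w unfolding hub_def by auto
      then have "w \<in> HH M m v" using c f unfolding HH_def by simp
      then show ?thesis using w by blast
    qed
  qed
  show "card (HH M m v) \<le> 1"
  proof -
    have fin: "finite (HH M m v)" unfolding HH_def by simp
    have "\<forall>a1\<in>HH M m v. \<forall>a2\<in>HH M m v. a1 = a2"
    proof (intro ballI)
      fix a1 a2 assume a: "a1 \<in> HH M m v" "a2 \<in> HH M m v"
      then have h: "hub v a1 \<in> M" "hub v a2 \<in> M" unfolding HH_def by auto
      have "Inl v \<in> hub v a1 \<inter> hub v a2" unfolding hub_def by auto
      then have "hub v a1 = hub v a2" using dis h by blast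
      then show "a1 = a2" by (rule hub_inj)
    qed
    then show ?thesis using card_le_Suc0_iff_eq[OF fin] by simp
  qed
  assume H0: "HH M m v = {}" and nv: "v \<notin> \<Union>(ME M E)"
  have "{0..<m} \<subseteq> \<Union>(NN M m v)"
  proof
    fix w assume "w \<in> {0..<m}"
    then have wm: "w < m" by simp
    have hC: "hub v w \<in> ?C" unfolding cor_mem using v wm by blast
    have "hub v w \<noteq> {}" unfolding hub_def by simp
    then obtain f where f: "f \<in> M" "hub v w \<inter> f \<noteq> {}" using max_dom[OF M hC] by blast
    have "f \<in> ?C" using f MC by blast
    then consider (a) e' where "e' \<in> E" "f = Inl ` e'" | (b) v' e' where "e' \<in> cycle_edges m" "f = img v' e'"
      | (c) v' w' where "w' < m" "f = hub v' w'" unfolding cor_mem by blast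
    then show "w \<in> \<Union>(NN M m v)"
    proof cases
      case a
      then have "v \<in> e'" using f(2) unfolding hub_def by auto
      then have "v \<in> \<Union>(ME M E)" using a f unfolding ME_def by auto
      then show ?thesis using nv by blast
    next
      case b
      then have "v' = v" "w \<in> e'" using f(2) unfolding img_def hub_def by auto
      then have "e' \<in> NN M m v" using b f unfolding NN_def by simp
      then show ?thesis using \<open>w \<in> e'\<close> by blast
    next
      case c
      then have "v' = v" using f(2) unfolding hub_def by auto
      then have "w' \<in> HH M m v" using c f unfolding HH_def by simp
      then show ?thesis using H0 by blast
    qed
  qed
  moreover have "\<forall>e\<in>NN M m v. card e = 2" using cyc_card[OF m3] unfolding NN_def by blast
  ultimately have "card {0..<m} \<le> 2 * card (NN M m v)"
  proof -
    assume sub: "{0..<m} \<subseteq> \<Union>(NN M m v)" and c2: "\<forall>e\<in>NN M m v. card e = 2"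
    have fN: "finite (NN M m v)" using cyc_fin unfolding NN_def by simp
    have "finite (\<Union>(NN M m v))" using fN cyc_sub unfolding NN_def
      by (intro finite_Union) (auto intro: finite_subset)
    then have "card {0..<m} \<le> card (\<Union>(NN M m v))" using sub by (rule card_mono)
    also have "\<dots> \<le> 2 * card (NN M m v)" using c2 by (rule card_Union_le2)
    finally show ?thesis .
  qed
  then show "m \<le> 2 * card (NN M m v)" by simp
qed

lemma ME_match:
  assumes M: "maximal_matching (corona_edges V E (cycle_vertices m) (cycle_edges m)) M"
  shows "matching E (ME M E)"
  unfolding matching_def
proof (intro conjI ballI impI)
  show "ME M E \<subseteq> E" unfolding ME_def by blast
  have mM: "matching (corona_edges V E (cycle_vertices m) (cycle_edges m)) M"
    using M unfolding maximal_matching_def by blast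
  fix e1 e2 assume e: "e1 \<in> ME M E" "e2 \<in> ME M E" "e1 \<noteq> e2"
  have "(Inl ` e1 :: ('a + 'a \<times> nat) set) \<noteq> Inl ` e2"
  proof
    assume "(Inl ` e1 :: ('a + 'a \<times> nat) set) = Inl ` e2"
    then have "e1 = e2" by (rule Inl_inj)
    then show False using e(3) by simp
  qed
  then have "(Inl ` e1 :: ('a + 'a \<times> nat) set) \<inter> Inl ` e2 = {}" using mM e unfolding ME_def matching_def by blast
  then show "e1 \<inter> e2 = {}" by auto
qed



lemma img_disj:
  assumes "matching (cycle_edges m) D" "e1 \<in> D" "e2 \<in> D" "img v e1 \<noteq> img v e2"
  shows "img v e1 \<inter> img v e2 = {}"
proof -
  have "e1 \<noteq> e2" using assms(4) by blast
  then have "e1 \<inter> e2 = {}" using assms(1-3) unfolding matching_def by blast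
  then show ?thesis unfolding img_def by auto
qed

lemma construct:
  assumes sg: "simple_graph V E" and m3: "m \<ge> 3" and M0: "matching E M0"
    and D0m: "matching (cycle_edges m) D0" and D0d: "\<forall>e\<in>cycle_edges m. \<exists>f\<in>D0. e \<inter> f \<noteq> {}"
    and D1m: "matching (cycle_edges m) D1" and D10: "0 \<notin> \<Union>D1"
    and D1d: "\<forall>e\<in>cycle_edges m. 0 \<in> e \<or> (\<exists>f\<in>D1. e \<inter> f \<noteq> {})"
  shows "\<exists>Mc. maximal_matching (corona_edges V E (cycle_vertices m) (cycle_edges m)) Mc \<and>
     card Mc \<le> card M0 + card (\<Union>M0) * card D0 + card (V - \<Union>M0) * (card D1 + 1)"
proof -
  let ?C = "corona_edges V E (cycle_vertices m) (cycle_edges m)"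
  note sp = simple_props[OF sg]
  define S where "S = \<Union>M0"
  have M0E: "M0 \<subseteq> E" using M0 unfolding matching_def by blast
  have SV: "S \<subseteq> V" unfolding S_def using M0E sp(4) by blast
  have D0C: "D0 \<subseteq> cycle_edges m" using D0m unfolding matching_def by blast
  have D1C: "D1 \<subseteq> cycle_edges m" using D1m unfolding matching_def by blast
  define A :: "('a + 'a \<times> nat) set set" where "A = (\<lambda>e. Inl ` e) ` M0"
  define K where "K v = (if v \<in> S then img v ` D0 else insert (hub v 0) (img v ` D1))" for v
  define Mc where "Mc = A \<union> (\<Union>v\<in>V. K v)"
  have Kcases: "(v \<in> S \<and> (\<exists>e\<in>D0. x = img v e)) \<or> (v \<notin> S \<and> (x = hub v 0 \<or> (\<exists>e\<in>D1. x = img v e)))"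
    if "x \<in> K v" for x v using that unfolding K_def by (cases "v \<in> S") auto
  have Kform: "\<forall>y\<in>x. y = Inl v \<or> (\<exists>w. y = Inr (v, w))" if "x \<in> K v" for x v
    using Kcases[OF that] unfolding img_def hub_def by auto
  have KInl: "Inl v \<in> x \<Longrightarrow> v \<notin> S" if "x \<in> K v" for x v
    using Kcases[OF that] unfolding img_def hub_def by auto
  have MC: "Mc \<subseteq> ?C"
  proof
    fix x assume "x \<in> Mc"
    then consider "x \<in> A" | v where "v \<in> V" "x \<in> K v" unfolding Mc_def by blast
    then show "x \<in> ?C"
    proof cases
      case 1 then show ?thesis unfolding A_def cor_mem using M0E by blast
    next
      case 2
      have m0: "(0::nat) < m" using m3 by simp
      from Kcases[OF 2(2)] consider e where "e \<in> D0" "x = img v e" | "x = hub v 0" | e where "e \<in> D1" "x = img v e"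
        by blast
      then show ?thesis
      proof cases
        case 1 then show ?thesis unfolding cor_mem using 2(1) D0C by blast
      next
        case 2 then show ?thesis unfolding cor_mem using \<open>v \<in> V\<close> m0 by blast
      next
        case 3 then show ?thesis unfolding cor_mem using 2(1) D1C by blast
      qed
    qed
  qed
  have disj: "f1 \<inter> f2 = {}" if f: "f1 \<in> Mc" "f2 \<in> Mc" "f1 \<noteq> f2" for f1 f2
  proof (rule ccontr)
    assume "f1 \<inter> f2 \<noteq> {}"
    then obtain y where y: "y \<in> f1" "y \<in> f2" by blast
    consider (AA) "f1 \<in> A" "f2 \<in> A" | (AK) v where "f1 \<in> A" "f2 \<in> K v"
      | (KA) v where "f2 \<in> A" "f1 \<in> K v" | (KK) v1 v2 where "f1 \<in> K v1" "f2 \<in> K v2"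
      using f(1,2) unfolding Mc_def by blast
    then show False
    proof cases
      case AA
      then obtain e1 e2 where e: "e1 \<in> M0" "e2 \<in> M0" "f1 = Inl ` e1" "f2 = Inl ` e2" unfolding A_def by blast
      then have "e1 \<noteq> e2" using f(3) by blast
      then have "e1 \<inter> e2 = {}" using M0 e unfolding matching_def by blast
      then show False using y e by auto
    next
      case AK
      then obtain e1 where e: "e1 \<in> M0" "f1 = Inl ` e1" unfolding A_def by blast
      then obtain u where u: "u \<in> e1" "y = Inl u" using y by auto
      then have "y = Inl v" using Kform[OF AK(2)] y by auto
      then have "Inl v \<in> f2" "v \<in> S" using y u e unfolding S_def by auto
      then show False using KInl[OF AK(2)] by blast
    next
      case KA
      then obtain e1 where e: "e1 \<in> M0" "f2 = Inl ` e1" unfolding A_def by blast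
      then obtain u where u: "u \<in> e1" "y = Inl u" using y by auto
      then have "y = Inl v" using Kform[OF KA(2)] y by auto
      then have "Inl v \<in> f1" "v \<in> S" using y u e unfolding S_def by auto
      then show False using KInl[OF KA(2)] by blast
    next
      case KK
      have "v1 = v2" using Kform[OF KK(1)] Kform[OF KK(2)] y by fastforce
      then have K2: "f2 \<in> K v1" using KK by simp
      show False
      proof (cases "v1 \<in> S")
        case True
        then obtain e1 e2 where e: "e1 \<in> D0" "e2 \<in> D0" "f1 = img v1 e1" "f2 = img v1 e2"
          using Kcases[OF KK(1)] Kcases[OF K2] by blast
        have "img v1 e1 \<noteq> img v1 e2" using f(3) e by simp
        then have "f1 \<inter> f2 = {}" using img_disj[OF D0m e(1,2)] e by simp
        then show False using y by blast
      next
        case False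
        then have c1: "f1 = hub v1 0 \<or> (\<exists>e\<in>D1. f1 = img v1 e)"
          and c2: "f2 = hub v1 0 \<or> (\<exists>e\<in>D1. f2 = img v1 e)"
          using Kcases[OF KK(1)] Kcases[OF K2] by blast+
        have hi: False if "e \<in> D1" "y \<in> hub v1 0" "y \<in> img v1 e" for e
        proof -
          have "y = Inr (v1, 0)" using that unfolding hub_def img_def by auto
          then have "0 \<in> e" using that unfolding img_def by auto
          then show False using D10 that by blast
        qed
        show False
        proof (cases "f1 = hub v1 0")
          case True
          then obtain e where "e \<in> D1" "f2 = img v1 e" using c2 f(3) by blast
          then show False using hi[of e] y True by simp
        next
          case False
          then obtain e where e: "e \<in> D1" "f1 = img v1 e" using c1 by blast
          show False
          proof (cases "f2 = hub v1 0")
            case True then show False using hi[of e] e y by simp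
          next
            case False
            then obtain e' where e': "e' \<in> D1" "f2 = img v1 e'" using c2 by blast
            have "img v1 e \<noteq> img v1 e'" using f(3) e e' by simp
            then have "f1 \<inter> f2 = {}" using img_disj[OF D1m e(1) e'(1)] e e' by simp
            then show False using y by blast
          qed
        qed
      qed
    qed
  qed
  have mMc: "matching ?C Mc" unfolding matching_def using MC disj by blast
  have dom: "\<forall>g\<in>?C. \<exists>f\<in>Mc. g \<inter> f \<noteq> {}"
  proof
    fix g assume "g \<in> ?C"
    then consider (a) e where "e \<in> E" "g = Inl ` e" | (b) v e where "v \<in> V" "e \<in> cycle_edges m" "g = img v e"
      | (c) v w where "v \<in> V" "w < m" "g = hub v w" unfolding cor_mem by blast
    then show "\<exists>f\<in>Mc. g \<inter> f \<noteq> {}"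
    proof cases
      case a
      then obtain u where u: "u \<in> e" using sp(5) by blast
      then have uV: "u \<in> V" using a sp(4) by blast
      show ?thesis
      proof (cases "u \<in> S")
        case True
        then obtain e' where "e' \<in> M0" "u \<in> e'" unfolding S_def by blast
        then have "Inl ` e' \<in> Mc" "Inl u \<in> g \<inter> Inl ` e'" using a u unfolding Mc_def A_def by auto
        then show ?thesis by blast
      next
        case False
        then have "hub u 0 \<in> Mc" unfolding Mc_def K_def using uV by auto
        moreover have "Inl u \<in> g \<inter> hub u 0" using a u unfolding hub_def by auto
        ultimately show ?thesis by blast
      qed
    next
      case b
      show ?thesis
      proof (cases "v \<in> S")
        case True
        obtain f where f: "f \<in> D0" "e \<inter> f \<noteq> {}" using D0d b(2) by blast
        then have "img v f \<in> Mc" unfolding Mc_def K_def using b(1) True by auto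
        moreover have "g \<inter> img v f \<noteq> {}" using f(2) b(3) unfolding img_def by auto
        ultimately show ?thesis by blast
      next
        case False
        from D1d b(2) consider "0 \<in> e" | f where "f \<in> D1" "e \<inter> f \<noteq> {}" by blast
        then show ?thesis
        proof cases
          case 1
          have "hub v 0 \<in> Mc" unfolding Mc_def K_def using b(1) False by auto
          moreover have "Inr (v, 0) \<in> g \<inter> hub v 0" using 1 b(3) unfolding img_def hub_def by auto
          ultimately show ?thesis by blast
        next
          case 2
          then have "img v f \<in> Mc" unfolding Mc_def K_def using b(1) False by auto
          moreover have "g \<inter> img v f \<noteq> {}" using 2(2) b(3) unfolding img_def by auto
          ultimately show ?thesis by blast
        qed
      qed
    next
      case c
      show ?thesis
      proof (cases "v \<in> S")
        case True
        then obtain e' where "e' \<in> M0" "v \<in> e'" unfolding S_def by blast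
        then have "Inl ` e' \<in> Mc" "Inl v \<in> g \<inter> Inl ` e'" using c unfolding Mc_def A_def hub_def by auto
        then show ?thesis by blast
      next
        case False
        then have "hub v 0 \<in> Mc" unfolding Mc_def K_def using c(1) by auto
        moreover have "Inl v \<in> g \<inter> hub v 0" using c unfolding hub_def by auto
        ultimately show ?thesis by blast
      qed
    qed
  qed
  have maxMc: "maximal_matching ?C Mc" using mMc dom by (rule dom_max)
  have finD0: "finite D0" using D0C cyc_fin finite_subset by blast
  have finD1: "finite D1" using D1C cyc_fin finite_subset by blast
  have cK: "card (K v) \<le> (if v \<in> S then card D0 else card D1 + 1)" for v
  proof (cases "v \<in> S")
    case True
    then show ?thesis unfolding K_def using card_image_le[OF finD0, of "img v"] by simp
  next
    case False
    have "card (K v) \<le> Suc (card (img v ` D1))" unfolding K_def using False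
      card_insert_if[OF finite_imageI[OF finD1, of "img v"], of "hub v 0"] by simp
    then show ?thesis using False card_image_le[OF finD1, of "img v"] by simp
  qed
  have "card Mc \<le> card A + card (\<Union>v\<in>V. K v)" unfolding Mc_def by (rule card_Un_le)
  also have "card A \<le> card M0" unfolding A_def by (rule card_image_le) (use M0E sp(2) finite_subset in blast)
  also have "card (\<Union>v\<in>V. K v) \<le> (\<Sum>v\<in>V. card (K v))" by (rule card_UN_le[OF sp(1)])
  also have "\<dots> \<le> (\<Sum>v\<in>V. (if v \<in> S then card D0 else card D1 + 1))" by (rule sum_mono) (rule cK)
  also have "\<dots> = (\<Sum>v\<in>V \<inter> {x. x \<in> S}. card D0) + (\<Sum>v\<in>V \<inter> - {x. x \<in> S}. card D1 + 1)"
    by (rule sum.If_cases[OF sp(1)])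
  also have "V \<inter> {x. x \<in> S} = S" using SV by blast
  also have "V \<inter> - {x. x \<in> S} = V - S" by blast
  finally have "card Mc \<le> card M0 + card S * card D0 + card (V - S) * (card D1 + 1)" by simp
  then show ?thesis using maxMc unfolding S_def by blast
qed



lemma lower_general:
  assumes sg: "simple_graph V E" and m3: "m \<ge> 3"
    and M: "maximal_matching (corona_edges V E (cycle_vertices m) (cycle_edges m)) M"
  shows "card (ME M E) + (\<Sum>v\<in>V. card (NN M m v) + card (HH M m v)) \<le> card M"
    "\<And>v. v \<in> V \<Longrightarrow> m \<le> 3 * card (NN M m v) + 2 * card (HH M m v)"
proof -
  have "M \<subseteq> corona_edges V E (cycle_vertices m) (cycle_edges m)"
    using M unfolding maximal_matching_def matching_def by blast
  then show "card (ME M E) + (\<Sum>v\<in>V. card (NN M m v) + card (HH M m v)) \<le> card M"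
    by (rule card_part[OF sg m3])
  fix v assume v: "v \<in> V"
  note cp = copy_props[OF sg m3 M v]
  show "m \<le> 3 * card (NN M m v) + 2 * card (HH M m v)"
    by (rule cycle_count[OF m3 cp(1) cp(2) cp(3) cp(4)])
qed

lemma arith1: "3*t+s \<le> 3*(x::nat) \<Longrightarrow> s \<ge> 1 \<Longrightarrow> t+1 \<le> x" by presburger
lemma arith2: "3*k \<le> 2*(n::nat) \<Longrightarrow> 1 \<le> k \<Longrightarrow> k+1 \<le> n" by presburger
lemma arith3: "3*k \<le> 3*(n::nat) + 2 \<Longrightarrow> k \<le> n" by presburger

theorem theorem2p5:
  fixes V :: "'a set" and E :: "'a set set" and m :: nat
  assumes "simple_graph V E" and "m \<ge> 3"
  shows "saturation_number (corona_edges V E (cycle_vertices m) (cycle_edges m)) =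
    (if m mod 3 = 0
     then card V * saturation_number (cycle_edges m) + matching_number E
          + (card V - 2 * matching_number E)
     else card V * saturation_number (cycle_edges m))"
proof -
  note sg = assms(1) and m3 = assms(2)
  let ?C = "corona_edges V E (cycle_vertices m) (cycle_edges m)"
  note sp = simple_props[OF sg]
  have finC: "finite ?C" by (rule cor_fin[OF sp(1,2)])
  have cs: "saturation_number (cycle_edges m) = (m + 2) div 3" by (rule cycle_sat[OF m3])
  define a where "a = matching_number E"
  obtain M0 where M0: "matching E M0" "card M0 = a"
    using matching_number_props(1)[OF sp(2)] unfolding a_def by blast
  have ale: "card M \<le> a" if "matching E M" for M
    using matching_number_props(2)[OF sp(2) that] unfolding a_def .
  have UM0: "card (\<Union>M0) = 2 * a" using card_Union_matching[OF M0(1) sp(3)] M0(2) by simp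
  have M0E: "M0 \<subseteq> E" using M0(1) unfolding matching_def by blast
  have UM0V: "\<Union>M0 \<subseteq> V" using M0E sp(4) by blast
  have aV: "2 * a \<le> card V" using card_mono[OF sp(1) UM0V] UM0 by simp
  have cdiff: "card (V - \<Union>M0) = card V - 2 * a"
    using card_Diff_subset[OF finite_subset[OF UM0V sp(1)] UM0V] UM0 by simp
  show ?thesis
  proof (cases "m mod 3 = 0")
    case True
    obtain k where k: "m = 3*k" using m0_cases[OF True] by blast
    have k1: "k \<ge> 1" using m3 k by simp
    have ck: "(m + 2) div 3 = k" "m div 3 = k" using k by simp_all
    let ?target = "card V * k + a + (card V - 2 * a)"
    have le0: "3 * (m div 3) + 0 \<le> m + 1" "3 * (m div 3) + 1 \<le> m + 1" using k by simp_all
    have PM0: "matching (cycle_edges m) (P 0 (m div 3))" using P_match[OF le0(1)] by simp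
    have PM1: "matching (cycle_edges m) (P 1 (m div 3))" using P_match[OF le0(2)] by simp
    have PD0: "\<forall>e\<in>cycle_edges m. \<exists>f\<in>P 0 (m div 3). e \<inter> f \<noteq> {}" using D0_dom[OF True m3] by blast
    have PD1: "\<forall>e\<in>cycle_edges m. 0 \<in> e \<or> (\<exists>f\<in>P 1 (m div 3). e \<inter> f \<noteq> {})" using D1a_dom[OF True m3] by blast
    have Pn0: "0 \<notin> \<Union>(P 1 (m div 3))" by (rule P_no0) simp
    obtain Mc where Mc: "maximal_matching ?C Mc"
      "card Mc \<le> card M0 + card (\<Union>M0) * card (P 0 (m div 3)) + card (V - \<Union>M0) * (card (P 1 (m div 3)) + 1)"
      using construct[OF sg m3 M0(1) PM0 PD0 PM1 Pn0 PD1] by blast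
    have "card Mc \<le> a + 2 * a * k + (card V - 2 * a) * (k + 1)"
    proof -
      have "card (\<Union>M0) * card (P 0 (m div 3)) \<le> 2 * a * k"
        using UM0 P_card[of 0 "m div 3"] ck by simp
      moreover have "card (V - \<Union>M0) * (card (P 1 (m div 3)) + 1) \<le> (card V - 2 * a) * (k + 1)"
        using cdiff P_card[of 1 "m div 3"] ck by simp
      ultimately show ?thesis using Mc(2) M0(2) by linarith
    qed
    also have "\<dots> = ?target"
    proof -
      obtain r where r: "card V = 2 * a + r" using aV le_Suc_ex by blast
      show ?thesis unfolding r by (simp add: algebra_simps)
    qed
    finally have up: "card Mc \<le> ?target" .
    have low: "?target \<le> card M" if M: "maximal_matching ?C M" for M
    proof -
      note lg = lower_general[OF sg m3 M]
      define U where "U = \<Union>(ME M E)"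
      have MEm: "matching E (ME M E)" by (rule ME_match[OF M])
      have cU: "card U = 2 * card (ME M E)" unfolding U_def by (rule card_Union_matching[OF MEm sp(3)])
      have UV: "U \<subseteq> V" unfolding U_def ME_def using sp(4) by blast
      have cVU: "card (V - U) = card V - 2 * card (ME M E)"
        using card_Diff_subset[OF finite_subset[OF UV sp(1)] UV] cU by simp
      have meA: "card (ME M E) \<le> a" by (rule ale[OF MEm])
      have meV: "2 * card (ME M E) \<le> card V" using card_mono[OF sp(1) UV] cU by simp
      have pv: "k + (if v \<in> U then 0 else 1) \<le> card (NN M m v) + card (HH M m v)" if v: "v \<in> V" for v
      proof -
        note cp = copy_props[OF sg m3 M v]
        have c3: "m \<le> 3 * card (NN M m v) + 2 * card (HH M m v)" by (rule lg(2)[OF v])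
        show ?thesis
        proof (cases "v \<in> U")
          case True
          then show ?thesis using c3 cp(5) k by simp
        next
          case False
          show ?thesis
          proof (cases "card (HH M m v) = 0")
            case True
            then have "HH M m v = {}" unfolding HH_def by simp
            then have "m \<le> 2 * card (NN M m v)" using cp(6) False unfolding U_def by blast
            then have "k + 1 \<le> card (NN M m v)" using arith2[OF _ k1] k by simp
            then show ?thesis using False by simp
          next
            case False2: False
            then have "card (HH M m v) = 1" using cp(5) by simp
            then have "k \<le> card (NN M m v)" using c3 k arith3 by simp
            then show ?thesis using False \<open>card (HH M m v) = 1\<close> by simp
          qed
        qed
      qed
      have "(\<Sum>v\<in>V. k + (if v \<in> U then 0 else 1)) \<le> (\<Sum>v\<in>V. card (NN M m v) + card (HH M m v))"
        by (rule sum_mono) (rule pv)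
      moreover have "(\<Sum>v\<in>V. k + (if v \<in> U then 0 else 1)) = card V * k + card (V - U)"
      proof -
        have "(\<Sum>v\<in>V. k + (if v \<in> U then 0 else (1::nat))) = (\<Sum>v\<in>V. k) + (\<Sum>v\<in>V. (if v \<in> U then 0 else (1::nat)))"
          by (rule sum.distrib)
        also have "(\<Sum>v\<in>V. (if v \<in> U then 0 else (1::nat))) = (\<Sum>v\<in>V \<inter> {x. x \<in> U}. 0) + (\<Sum>v\<in>V \<inter> - {x. x \<in> U}. 1)"
          by (rule sum.If_cases[OF sp(1)])
        also have "V \<inter> - {x. x \<in> U} = V - U" by blast
        finally show ?thesis by simp
      qed
      ultimately have "card V * k + (card V - 2 * card (ME M E)) + card (ME M E) \<le> card M"
        using lg(1) cVU by linarith
      then show ?thesis using meA meV aV by linarith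
    qed
    have "saturation_number ?C = ?target"
      by (rule sat_eq[OF finC Mc(1) up low])
    then show ?thesis using True cs ck unfolding a_def by simp
  next
    case False
    obtain t s where ts: "m = 3*t+s" "s = 1 \<or> s = 2" using m12_cases[OF False] by metis
    have ct: "(m + 2) div 3 = t + 1" "(m - 1) div 3 = t" using ts by auto
    let ?target = "card V * (t + 1)"
    define D where "D = insert {0,1} (P 2 ((m-1) div 3))"
    have le: "3 * ((m-1) div 3) + 2 \<le> m + 1" using ct ts by auto
    have s01: "{0,1} \<in> cycle_edges m" unfolding cyc_mem using m3
      by (intro exI[of _ 0]) auto
    have Dm: "matching (cycle_edges m) D"
      using P_match[OF le] s01 P_no0[of 2] P2_no1 unfolding D_def matching_def
      by (auto; blast)
    have Dd: "\<forall>e\<in>cycle_edges m. \<exists>f\<in>D. e \<inter> f \<noteq> {}"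
    proof
      fix e assume "e \<in> cycle_edges m"
      from D1b_dom[OF False m3 this] show "\<exists>f\<in>D. e \<inter> f \<noteq> {}" unfolding D_def by auto
    qed
    have m0: "matching E {}" unfolding matching_def by simp
    have PM2: "matching (cycle_edges m) (P 2 ((m-1) div 3))" using P_match[OF le] by simp
    have PD2: "\<forall>e\<in>cycle_edges m. 0 \<in> e \<or> (\<exists>f\<in>P 2 ((m-1) div 3). e \<inter> f \<noteq> {})" using D1b_dom[OF False m3] by blast
    have Pn2: "0 \<notin> \<Union>(P 2 ((m-1) div 3))" by (rule P_no0) simp
    obtain Mc where Mc: "maximal_matching ?C Mc"
      "card Mc \<le> card ({}::'a set set) + card (\<Union>{}::'a set) * card D + card (V - \<Union>{}) * (card (P 2 ((m-1) div 3)) + 1)"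
      using construct[OF sg m3 m0 Dm Dd PM2 Pn2 PD2] by blast
    have up: "card Mc \<le> ?target"
    proof -
      have "card (P 2 ((m-1) div 3)) + 1 \<le> t + 1" using P_card[of 2 "(m-1) div 3"] ct by simp
      then have "card V * (card (P 2 ((m-1) div 3)) + 1) \<le> card V * (t + 1)" by (rule mult_le_mono2)
      moreover have "card Mc \<le> card V * (card (P 2 ((m-1) div 3)) + 1)" using Mc(2) by simp
      ultimately show ?thesis by (rule le_trans[rotated])
    qed
    have low: "?target \<le> card M" if M: "maximal_matching ?C M" for M
    proof -
      note lg = lower_general[OF sg m3 M]
      have pv: "t + 1 \<le> card (NN M m v) + card (HH M m v)" if v: "v \<in> V" for v
      proof -
        note cp = copy_props[OF sg m3 M v]
        have "m \<le> 3 * (card (NN M m v) + card (HH M m v))" using lg(2)[OF v] by simp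
        then show ?thesis using arith1[of t s] ts by auto
      qed
      have "(\<Sum>v\<in>V. t + 1) \<le> (\<Sum>v\<in>V. card (NN M m v) + card (HH M m v))"
        by (rule sum_mono) (rule pv)
      then show ?thesis using lg(1) by simp
    qed
    have "saturation_number ?C = ?target"
      by (rule sat_eq[OF finC Mc(1) up low])
    then show ?thesis using False cs ct by simp
  qed
qed


end
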